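(* Let $(Y,\mathfrak{T})$ be a fuzzy topological space and let $\mathcal{P},\mathcal{G}$ be fuzzy primals on $Y$. Then $\mathfrak{T}^\diamond_{\mathcal{P}\cup\mathcal{G}}=\mathfrak{T}^\diamond_{\mathcal{P}}\cap\mathfrak{T}^\diamond_{\mathcal{G}}$.
   Context: Let $Y$ be a nonempty set and $\mathbb{I}=[0,1]$. A fuzzy set in $Y$ is a map $Y\to\mathbb{I}$; $\mathbb{I}^Y$ is the set of all fuzzy sets; $0_Y,1_Y$ are the constant maps with values $0,1$; $\mu\subseteq\nu$ means $\mu(y)\le\nu(y)$ for all $y$; unions/intersections are pointwise sup/inf; $\bar\mu=1_Y-\mu$. For $\mu,\nu\in\mathbb{I}^Y$, $(\mu\oplus\nu)(y)=\min(\mu(y)+\nu(y),1)$. A fuzzy point $y_t$ ($y\in Y$, $t\in(0,1]$) is the fuzzy set with value $t$ at $y$ and $0$ elsewhere; $y_t\in\mu$ means $t\le\mu(y)$. We write $y_t\prec\mu$ if $t+\mu(y)>1$. A set $F$ of fuzzy points is identified with the fuzzy set $y\mapsto\sup\{t: y_t\in F\}$ (with $\sup\emptyset=0$). A fuzzy topology on $Y$ is a family $\mathfrak{T}\subseteq\mathbb{I}^Y$ containing $0_Y,1_Y$ and closed under finite intersections and arbitrary unions. For a fuzzy point $y_t$, $\mathcal{Q}(y_t)=\{\mu\in\mathfrak{T}: y_t\prec\mu\}$. A fuzzy primal on $Y$ is a family $\mathcal{P}\subseteq\mathbb{I}^Y$ such that: (i) $1_Y\notin\mathcal{P}$; (ii)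 if $\mu\in\mathcal{P}$ and $\nu\subseteq\mu$ then $\nu\in\mathcal{P}$; (iii) if $\mu\cap\nu\in\mathcal{P}$ then $\mu\in\mathcal{P}$ or $\nu\in\mathcal{P}$. (The union of two fuzzy primals is a fuzzy primal.) For a fuzzy primal $\mathcal{P}$ and $\lambda\in\mathbb{I}^Y$, $\lambda^\diamond_{\mathcal{P}}$ is the set of fuzzy points $y_t$ such that $\bar{\lambda}\oplus\bar{\mu}\in\mathcal{P}$ for every $\mu\in\mathcal{Q}(y_t)$; $Cl^\diamond_{\mathcal{P}}(\lambda)=\lambda\cup\lambda^\diamond_{\mathcal{P}}$; and $\mathfrak{T}^\diamond_{\mathcal{P}}=\{\mu\in\mathbb{I}^Y: Cl^\diamond_{\mathcal{P}}(\bar{\mu})=\bar{\mu}\}$. *)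

theory Defs
  imports "HOL-Analysis.Analysis"
begin

text \<open>Fuzzy sets on the ground type 'a (the set Y = UNIV, nonempty) are maps into the
  real interval [0,1].\<close>

definition fuzzy_sets :: "('a \<Rightarrow> real) set" where
  "fuzzy_sets = {\<mu>. \<forall>y. 0 \<le> \<mu> y \<and> \<mu> y \<le> 1}"

definition fcompl :: "('a \<Rightarrow> real) \<Rightarrow> 'a \<Rightarrow> real" where
  "fcompl \<mu> = (\<lambda>y. 1 - \<mu> y)"

definition fplus :: "('a \<Rightarrow> real) \<Rightarrow> ('a \<Rightarrow> real) \<Rightarrow> 'a \<Rightarrow> real" where
  "fplus \<mu> \<nu> = (\<lambda>y. min (\<mu> y + \<nu> y) 1)"

definition fuzzy_topology :: "('a \<Rightarrow> real) set \<Rightarrow> bool" where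
  "fuzzy_topology T \<longleftrightarrow> T \<subseteq> fuzzy_sets \<and> (\<lambda>_. 0) \<in> T \<and> (\<lambda>_. 1) \<in> T
     \<and> (\<forall>\<mu>\<in>T. \<forall>\<nu>\<in>T. (\<lambda>y. min (\<mu> y) (\<nu> y)) \<in> T)
     \<and> (\<forall>S\<subseteq>T. (\<lambda>y. if S = {} then 0 else Sup ((\<lambda>\<mu>. \<mu> y) ` S)) \<in> T)"

definition fuzzy_primal :: "('a \<Rightarrow> real) set \<Rightarrow> bool" where
  "fuzzy_primal P \<longleftrightarrow> P \<subseteq> fuzzy_sets \<and> (\<lambda>_. 1) \<notin> P
     \<and> (\<forall>\<mu>\<in>P. \<forall>\<nu>\<in>fuzzy_sets. (\<forall>y. \<nu> y \<le> \<mu> y) \<longrightarrow> \<nu> \<in> P)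
     \<and> (\<forall>\<mu>\<in>fuzzy_sets. \<forall>\<nu>\<in>fuzzy_sets. (\<lambda>y. min (\<mu> y) (\<nu> y)) \<in> P \<longrightarrow> \<mu> \<in> P \<or> \<nu> \<in> P)"

definition qcoinc :: "'a \<Rightarrow> real \<Rightarrow> ('a \<Rightarrow> real) \<Rightarrow> bool" where
  "qcoinc y t \<mu> \<longleftrightarrow> t + \<mu> y > 1"

definition Qnbhd :: "('a \<Rightarrow> real) set \<Rightarrow> 'a \<Rightarrow> real \<Rightarrow> ('a \<Rightarrow> real) set" where
  "Qnbhd T y t = {\<mu>\<in>T. qcoinc y t \<mu>}"

text \<open>lambda^diamond as a set of fuzzy points (pairs (y,t) with 0 < t \<le> 1).\<close>

definition diamond_pts :: "('a \<Rightarrow> real) set \<Rightarrow> ('a \<Rightarrow> real) set \<Rightarrow> ('a \<Rightarrow> real) \<Rightarrow> ('a \<times> real) set" where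
  "diamond_pts T P lam = {(y,t). 0 < t \<and> t \<le> 1 \<and>
      (\<forall>\<mu>\<in>Qnbhd T y t. fplus (fcompl lam) (fcompl \<mu>) \<in> P)}"

text \<open>A set of fuzzy points identified with the fuzzy set y \<mapsto> sup {t. y_t \<in> F} (sup of empty = 0).\<close>

definition pts_to_fuzzy :: "('a \<times> real) set \<Rightarrow> 'a \<Rightarrow> real" where
  "pts_to_fuzzy F = (\<lambda>y. if {t. (y,t) \<in> F} = {} then 0 else Sup {t. (y,t) \<in> F})"

definition diamond :: "('a \<Rightarrow> real) set \<Rightarrow> ('a \<Rightarrow> real) set \<Rightarrow> ('a \<Rightarrow> real) \<Rightarrow> 'a \<Rightarrow> real" where
  "diamond T P lam = pts_to_fuzzy (diamond_pts T P lam)"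

definition cl_diamond :: "('a \<Rightarrow> real) set \<Rightarrow> ('a \<Rightarrow> real) set \<Rightarrow> ('a \<Rightarrow> real) \<Rightarrow> 'a \<Rightarrow> real" where
  "cl_diamond T P lam = (\<lambda>y. max (lam y) (diamond T P lam y))"

definition T_diamond :: "('a \<Rightarrow> real) set \<Rightarrow> ('a \<Rightarrow> real) set \<Rightarrow> ('a \<Rightarrow> real) set" where
  "T_diamond T P = {\<mu>\<in>fuzzy_sets. cl_diamond T P (fcompl \<mu>) = fcompl \<mu>}"

end

theory Submission
  imports Defs
begin

lemma fplus_fs: "a \<in> fuzzy_sets \<Longrightarrow> b \<in> fuzzy_sets \<Longrightarrow> fplus a b \<in> fuzzy_sets"
  by (auto simp: fuzzy_sets_def fplus_def)

lemma fcompl_fs: "a \<in> fuzzy_sets \<Longrightarrow> fcompl a \<in> fuzzy_sets"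
  by (auto simp: fuzzy_sets_def fcompl_def)

lemma pts_union:
  assumes T: "fuzzy_topology T" and P: "fuzzy_primal P" and G: "fuzzy_primal G"
    and lam: "lam \<in> fuzzy_sets"
  shows "diamond_pts T (P \<union> G) lam = diamond_pts T P lam \<union> diamond_pts T G lam"
proof
  show "diamond_pts T P lam \<union> diamond_pts T G lam \<subseteq> diamond_pts T (P \<union> G) lam"
    by (auto simp: diamond_pts_def)
next
  show "diamond_pts T (P \<union> G) lam \<subseteq> diamond_pts T P lam \<union> diamond_pts T G lam"
  proof (rule subsetI, rule ccontr)
    fix p assume pin: "p \<in> diamond_pts T (P \<union> G) lam"
      and nin: "p \<notin> diamond_pts T P lam \<union> diamond_pts T G lam"
    obtain y t where p: "p = (y,t)" by (cases p)
    from pin p have t: "0 < t" "t \<le> 1"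
      and all: "\<forall>\<mu>\<in>Qnbhd T y t. fplus (fcompl lam) (fcompl \<mu>) \<in> P \<union> G"
      by (auto simp: diamond_pts_def)
    from nin p t obtain m1 where m1: "m1 \<in> Qnbhd T y t" "fplus (fcompl lam) (fcompl m1) \<notin> P"
      by (auto simp: diamond_pts_def)
    from nin p t obtain m2 where m2: "m2 \<in> Qnbhd T y t" "fplus (fcompl lam) (fcompl m2) \<notin> G"
      by (auto simp: diamond_pts_def)
    define m where "m = (\<lambda>y. min (m1 y) (m2 y))"
    have TT: "T \<subseteq> fuzzy_sets" using T by (simp add: fuzzy_topology_def)
    have m1T: "m1 \<in> T" and m2T: "m2 \<in> T" using m1 m2 by (auto simp: Qnbhd_def)
    have "m \<in> T" using T m1T m2T by (simp add: fuzzy_topology_def m_def)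
    moreover have "qcoinc y t m" using m1 m2 by (auto simp: Qnbhd_def qcoinc_def m_def)
    ultimately have mQ: "m \<in> Qnbhd T y t" by (simp add: Qnbhd_def)
    have fs: "fplus (fcompl lam) (fcompl m1) \<in> fuzzy_sets" "fplus (fcompl lam) (fcompl m2) \<in> fuzzy_sets"
      using m1T m2T TT lam by (auto intro!: fplus_fs fcompl_fs)
    have le1: "\<forall>z. fplus (fcompl lam) (fcompl m1) z \<le> fplus (fcompl lam) (fcompl m) z"
      and le2: "\<forall>z. fplus (fcompl lam) (fcompl m2) z \<le> fplus (fcompl lam) (fcompl m) z"
      by (auto simp: fplus_def fcompl_def m_def)
    from all mQ have "fplus (fcompl lam) (fcompl m) \<in> P \<union> G" by blast
    then show False
    proof
      assume "fplus (fcompl lam) (fcompl m) \<in> P"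
      with P fs le1 m1 show False unfolding fuzzy_primal_def by blast
    next
      assume "fplus (fcompl lam) (fcompl m) \<in> G"
      with G fs le2 m2 show False unfolding fuzzy_primal_def by blast
    qed
  qed
qed

lemma ptf_union:
  assumes "\<And>y t. (y,t) \<in> A \<Longrightarrow> 0 < t \<and> t \<le> 1" "\<And>y t. (y,t) \<in> B \<Longrightarrow> 0 < t \<and> t \<le> 1"
  shows "pts_to_fuzzy (A \<union> B) y = max (pts_to_fuzzy A y) (pts_to_fuzzy B y)"
proof -
  let ?A = "{t. (y,t) \<in> A}" and ?B = "{t. (y,t) \<in> B}"
  have bA: "bdd_above ?A" using assms(1) by (auto simp: bdd_above_def)
  have bB: "bdd_above ?B" using assms(2) by (auto simp: bdd_above_def)
  have u: "{t. (y,t) \<in> A \<union> B} = ?A \<union> ?B" by auto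
  have pA: "?A \<noteq> {} \<Longrightarrow> 0 \<le> Sup ?A"
  proof -
    assume "?A \<noteq> {}" then obtain t where "t \<in> ?A" by blast
    moreover have "t \<le> Sup ?A" using calculation bA by (rule cSup_upper)
    ultimately show ?thesis using assms(1)[of y t] by simp
  qed
  have pB: "?B \<noteq> {} \<Longrightarrow> 0 \<le> Sup ?B"
  proof -
    assume "?B \<noteq> {}" then obtain t where "t \<in> ?B" by blast
    moreover have "t \<le> Sup ?B" using calculation bB by (rule cSup_upper)
    ultimately show ?thesis using assms(2)[of y t] by simp
  qed
  show ?thesis
  proof (cases "?A = {}")
    case True
    then show ?thesis unfolding pts_to_fuzzy_def u using pB by (auto simp: max_def)
  next
    case False
    show ?thesis
    proof (cases "?B = {}")
      case True
      then show ?thesis unfolding pts_to_fuzzy_def u using pA False by (auto simp: max_def)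
    next
      case False2: False
      have "?A \<union> ?B \<noteq> {}" using False by blast
      then show ?thesis unfolding pts_to_fuzzy_def u using False False2
        by (simp only: if_False cSup_union_distrib[OF False bA False2 bB] sup_max)
    qed
  qed
qed

lemma dpts_bounds: "(y,t) \<in> diamond_pts T P lam \<Longrightarrow> 0 < t \<and> t \<le> 1"
  by (auto simp: diamond_pts_def)

theorem theorem4p11:
  fixes T P G :: "('a \<Rightarrow> real) set"
  assumes "fuzzy_topology T" and "fuzzy_primal P" and "fuzzy_primal G"
  shows "T_diamond T (P \<union> G) = T_diamond T P \<inter> T_diamond T G"
proof -
  have key: "diamond T (P \<union> G) (fcompl mu) y = max (diamond T P (fcompl mu) y) (diamond T G (fcompl mu) y)"
    if "mu \<in> fuzzy_sets" for mu y
    unfolding diamond_def pts_union[OF assms fcompl_fs[OF that]]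
    by (rule ptf_union) (auto dest: dpts_bounds)
  have cl: "cl_diamond T Q l = l \<longleftrightarrow> (\<forall>y. diamond T Q l y \<le> l y)" for Q l
    unfolding cl_diamond_def fun_eq_iff by (metis max.absorb_iff1)
  show ?thesis
    unfolding T_diamond_def cl using key by auto
qed

end
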